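(* Let $q\ge 2$ be a prime power, $n=q^2(q^2-q+1)$, and $X\subseteq V(H_q)$ with $|X|=k$. Partition $\mathcal T_X$ into $\mathcal S\sqcup\mathcal M\sqcup\mathcal L$, where $\mathcal S=\{T\in\mathcal T_X : |T|\le \sqrt{2k}/\log n\}$, $\mathcal M=\{T\in\mathcal T_X: \sqrt{2k}/\log n<|T|\le\sqrt{2k}\}$, $\mathcal L=\{T\in\mathcal T_X: |T|>\sqrt{2k}\}$. For $\mathcal U\subseteq\mathcal T_X$ write $v(\mathcal U)=\sum_{T\in\mathcal U}|T|$. Then \[ v(\mathcal L)\le 2k \qquad\text{and}\qquad v(\mathcal S\sqcup\mathcal M)\ge (q-1)k-q^3-1. \]
   Context: $\mathcal H$ is the Hermitian unital $\{\langle x,y,z\rangle : x^{q+1}+y^{q+1}+z^{q+1}=0\}$ in the projective plane $\mathrm{PG}(2,q^2)$ (it has $q^3+1$ points and every line meets it in $1$ or $q+1$ points; lines meeting it in $q+1$ points are secants). $H_q$ is the graph on the set of secants, two distinct secants adjacent iff they meet in a point of $\mathcal H$. For $P\in\mathcal H$, $C_P$ is the set of secants through $P$ and $\mathcal C=\{C_P:P\in\mathcal H\}$; these are $q^3+1$ cliques of order $q^2$, any two sharing exactly one vertex, and every vertex lies in exactly $q+1$ of them. For $X\subseteq V(H_q)$, $\mathcal T_X=\{X\cap C : C\in\mathcal C,\ |X\cap C|\ge 2\}$ (indexed by the cliques $C$). Logarithms are natural. *)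

theory Defs
  imports Complex_Main "HOL-Computational_Algebra.Primes"
begin

text \<open>Projective plane PG(2,F) over a finite field F (of order q^2 in the application).
  A point is the set of nonzero scalar multiples of a nonzero vector in F^3.\<close>

definition proj_point :: "'a::field \<times> 'a \<times> 'a \<Rightarrow> ('a \<times> 'a \<times> 'a) set" where
  "proj_point v = {(c * fst v, c * fst (snd v), c * snd (snd v)) | c. c \<noteq> 0}"

definition pg_points :: "('a::field \<times> 'a \<times> 'a) set set" where
  "pg_points = {proj_point v | v. v \<noteq> (0, 0, 0)}"

definition pg_line :: "'a::field \<times> 'a \<times> 'a \<Rightarrow> ('a \<times> 'a \<times> 'a) set set" where
  "pg_line l = {P \<in> pg_points. \<forall>(x, y, z) \<in> P.
      fst l * x + fst (snd l) * y + snd (snd l) * z = 0}"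

definition pg_lines :: "('a::field \<times> 'a \<times> 'a) set set set" where
  "pg_lines = {pg_line l | l. l \<noteq> (0, 0, 0)}"

definition hermitian_unital :: "nat \<Rightarrow> ('a::field \<times> 'a \<times> 'a) set set" where
  "hermitian_unital q = {P \<in> pg_points. \<forall>(x, y, z) \<in> P.
      x ^ (q + 1) + y ^ (q + 1) + z ^ (q + 1) = 0}"

text \<open>Secants: lines meeting the unital in q+1 points. These are the vertices of H_q.\<close>
definition secants :: "nat \<Rightarrow> ('a::field \<times> 'a \<times> 'a) set set set" where
  "secants q = {L \<in> pg_lines. card (L \<inter> hermitian_unital q) = q + 1}"

definition clique :: "nat \<Rightarrow> ('a::field \<times> 'a \<times> 'a) set \<Rightarrow> ('a \<times> 'a \<times> 'a) set set set" where
  "clique q P = {L \<in> secants q. P \<in> L}"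

definition cliques :: "nat \<Rightarrow> ('a::field \<times> 'a \<times> 'a) set set set set" where
  "cliques q = clique q ` hermitian_unital q"

text \<open>T_X, indexed by the cliques C with |X \<inter> C| \<ge> 2; the member indexed by C is X \<inter> C.\<close>
definition TX :: "nat \<Rightarrow> ('a::field \<times> 'a \<times> 'a) set set set \<Rightarrow> ('a \<times> 'a \<times> 'a) set set set set" where
  "TX q X = {C \<in> cliques q. card (X \<inter> C) \<ge> 2}"

definition vol :: "('a::field \<times> 'a \<times> 'a) set set set \<Rightarrow> ('a \<times> 'a \<times> 'a) set set set set \<Rightarrow> nat" where
  "vol X U = (\<Sum>C\<in>U. card (X \<inter> C))"

end

theory Submission
  imports Defs "HOL-Computational_Algebra.Polynomial"
begin

lemma fermat:
  fixes a :: "'a::{finite,field}"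
  assumes "a \<noteq> 0"
  shows "a ^ (card (UNIV::'a set) - 1) = 1"
proof -
  let ?G = "UNIV - {0::'a}"
  have bij: "bij_betw (\<lambda>x. a*x) ?G ?G"
    unfolding bij_betw_def inj_on_def
  proof (intro conjI ballI impI)
    show "(*) a ` ?G = ?G"
    proof
      show "(*) a ` ?G \<subseteq> ?G" using assms by auto
      show "?G \<subseteq> (*) a ` ?G"
      proof
        fix y assume "y \<in> ?G"
        then have "y = a * (y / a)" "y / a \<in> ?G" using assms by auto
        then show "y \<in> (*) a ` ?G" by blast
      qed
    qed
  qed (use assms in auto)
  have "prod id ?G = (\<Prod>x\<in>?G. a * x)"
    using prod.reindex_bij_betw[OF bij, of id] by simp
  also have "\<dots> = a ^ card ?G * prod id ?G"
    by (simp add: prod.distrib)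
  finally have "prod id ?G = a ^ card ?G * prod id ?G" .
  moreover have "prod id ?G \<noteq> 0" by (simp add: prod_zero_iff)
  ultimately have "a ^ card ?G = 1" by simp
  moreover have "card ?G = card (UNIV::'a set) - 1"
    by (simp add: card_Diff_singleton)
  ultimately show ?thesis by simp
qed

lemma root_bound:
  fixes w :: "'a::field"
  assumes "m \<ge> 1"
  shows "card {z. z ^ m = w} \<le> m"
proof -
  let ?p = "monom (1::'a) m + [:-w:]"
  have deg: "degree ?p = m"
    using assms by (subst degree_add_eq_left) (auto simp: degree_monom_eq)
  have "?p \<noteq> 0" using deg assms by auto
  then have "card {x. poly ?p x = 0} \<le> degree ?p" by (rule card_poly_roots_bound)
  moreover have "{x. poly ?p x = 0} = {z. z ^ m = w}" by (simp add: poly_monom)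
  ultimately show ?thesis using deg by simp
qed

context
  fixes q :: nat
  assumes q2: "q \<ge> 2" and cardF: "card (UNIV :: 'a::{finite,field} set) = q ^ 2"
begin

lemma normK:
  fixes z :: 'a
  assumes "z \<noteq> 0"
  shows "(z ^ (q+1)) ^ (q-1) = 1"
proof -
  have "(q+1)*(q-1) = q^2 - 1" using q2 by (simp add: power2_eq_square algebra_simps diff_mult_distrib)
  then have "(z ^ (q+1)) ^ (q-1) = z ^ (card (UNIV::'a set) - 1)"
    by (simp only: cardF power_mult[symmetric])
  also have "\<dots> = 1" by (rule fermat[OF assms])
  finally show ?thesis .
qed

lemma minus_one_K: "(-1::'a) ^ (q-1) = 1"
proof (cases "even q")
  case False
  then have "even (q-1)" using q2 by simp
  then show ?thesis by simp
next
  case True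
  then have "odd (q^2 - 1)" using q2 by (simp add: power2_eq_square)
  then have "(-1::'a) ^ (q^2-1) = -1" by simp
  moreover have "(-1::'a) ^ (q^2-1) = 1" using fermat[of "-1::'a"] cardF by simp
  ultimately have "(-1::'a) = 1" by simp
  then show ?thesis by (metis power_one)
qed

lemma K_card: "card {w::'a. w ^ (q-1) = 1} \<le> q - 1"
  using root_bound[of "q-1" "1::'a"] q2 by simp

lemma fib_zero: "{z::'a. z ^ (q+1) = 0} = {0}" by auto

lemma fib_card:
  fixes w :: 'a
  assumes w0: "w \<noteq> 0" and wK: "w ^ (q-1) = 1"
  shows "card {z. z ^ (q+1) = w} = q + 1"
proof (rule ccontr)
  assume ne: "card {z. z ^ (q+1) = w} \<noteq> q + 1"
  define K where "K = {w::'a. w ^ (q-1) = 1}"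
  define f where "f = (\<lambda>w::'a. {z::'a. z ^ (q+1) = w})"
  have wK': "w \<in> K" using wK K_def by simp
  have le: "\<And>u. card (f u) \<le> q + 1" unfolding f_def by (rule root_bound) simp
  have lt: "card (f w) \<le> q" using ne le[of w] unfolding f_def by force
  have U: "UNIV - {0::'a} = (\<Union>u\<in>K. f u)"
  proof
    show "UNIV - {0::'a} \<subseteq> (\<Union>u\<in>K. f u)"
    proof
      fix z :: 'a assume "z \<in> UNIV - {0}"
      then have "z ^ (q+1) \<in> K" "z \<in> f (z ^ (q+1))" using normK[of z] by (auto simp: K_def f_def)
      then show "z \<in> (\<Union>u\<in>K. f u)" by blast
    qed
    show "(\<Union>u\<in>K. f u) \<subseteq> UNIV - {0::'a}"
    proof -
      have "q - 1 \<noteq> 0" using q2 by simp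
      then have "(0::'a) ^ (q-1) \<noteq> 1" by (simp add: power_0_left)
      then show ?thesis by (auto simp: K_def f_def)
    qed
  qed
  have "card (UNIV - {0::'a}) = (\<Sum>u\<in>K. card (f u))"
    unfolding U by (rule card_UN_disjoint) (auto simp: f_def)
  also have "\<dots> = card (f w) + (\<Sum>u\<in>K - {w}. card (f u))"
    using wK' by (simp add: sum.remove)
  also have "\<dots> \<le> q + (\<Sum>u\<in>K - {w}. q + 1)"
    using lt le by (intro add_mono sum_mono) auto
  also have "\<dots> = q + (card K - 1) * (q + 1)" using wK' by simp
  also have "\<dots> \<le> q + (q - 2) * (q + 1)"
    using K_card unfolding K_def[symmetric] by (intro add_mono mult_right_mono) auto
  finally have A: "card (UNIV - {0::'a}) \<le> q + (q - 2) * (q + 1)" .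
  have "card (UNIV - {0::'a}) = q^2 - 1" by (simp add: card_Diff_singleton cardF)
  with A q2 show False
    by (cases q; cases "q - 1"; simp add: power2_eq_square algebra_simps)
qed


lemma negK_card:
  fixes y :: 'a
  assumes "y \<noteq> 0"
  shows "card {z. z ^ (q+1) = - (y ^ (q+1))} = q + 1"
proof (rule fib_card)
  show "- (y ^ (q+1)) \<noteq> 0" using assms by simp
  have "(- (y ^ (q+1))) ^ (q-1) = (-1) ^ (q-1) * (y ^ (q+1)) ^ (q-1)"
    by (metis mult_minus1 power_mult_distrib)
  then show "(- (y ^ (q+1))) ^ (q-1) = 1" using minus_one_K normK[OF assms] by simp
qed

lemma sol_card:
  "card {(x,y,z). x^(q+1)+y^(q+1)+z^(q+1) = (0::'a)} \<le> 1 + (q^2-1)*(q^3+1)"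
proof -
  define f where "f = (\<lambda>w::'a. {z::'a. z ^ (q+1) = w})"
  define g where "g = (\<lambda>x y::'a. card (f (- (x^(q+1) + y^(q+1)))))"
  define h where "h = (\<lambda>x::'a. \<Sum>y\<in>UNIV. g x y)"
  have f0: "f 0 = {0}" unfolding f_def by (rule fib_zero)
  have fle: "\<And>u. card (f u) \<le> q + 1" unfolding f_def by (rule root_bound) simp
  have seteq: "{(x,y,z). x^(q+1)+y^(q+1)+z^(q+1) = (0::'a)}
      = Sigma UNIV (\<lambda>x. Sigma UNIV (\<lambda>y. f (- (x^(q+1) + y^(q+1)))))"
    by (auto simp: f_def eq_neg_iff_add_eq_0 ac_simps) (metis add_diff_cancel_left' diff_0 diff_diff_eq)
  have cS: "card {(x,y,z). x^(q+1)+y^(q+1)+z^(q+1) = (0::'a)} = (\<Sum>x\<in>UNIV. h x)"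
    unfolding seteq h_def g_def by (simp add: card_SigmaI)
  have cY: "card (UNIV - {0::'a}) = q^2 - 1" by (simp add: card_Diff_singleton cardF)
  have h0: "h 0 \<le> 1 + (q^2-1)*(q+1)"
  proof -
    have "h 0 = g 0 0 + (\<Sum>y\<in>UNIV - {0}. g 0 y)"
      unfolding h_def by (simp add: sum.remove)
    also have "g 0 0 = 1" unfolding g_def using f0 by simp
    also have "(\<Sum>y\<in>UNIV - {0}. g 0 y) = (\<Sum>y\<in>UNIV - {0::'a}. q + 1)"
    proof (rule sum.cong)
      fix y :: 'a assume "y \<in> UNIV - {0}"
      then have y0: "y \<noteq> 0" by simp
      have "g 0 y = card (f (- (y^(q+1))))" unfolding g_def by simp
      also have "\<dots> = q + 1" unfolding f_def by (rule negK_card[OF y0])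
      finally show "g 0 y = q + 1" .
    qed simp
    finally show ?thesis using cY by simp
  qed
  have hx: "h x \<le> (q+1)*(q^2-q)" if x0: "x \<noteq> 0" for x
  proof -
    define Y1 where "Y1 = f (- (x^(q+1)))"
    have Y1sub: "Y1 \<subseteq> UNIV - {0}" using x0 by (auto simp: Y1_def f_def)
    have cY1: "card Y1 = q + 1" unfolding Y1_def f_def by (rule negK_card[OF x0])
    have "h x = g x 0 + (\<Sum>y\<in>UNIV - {0}. g x y)"
      unfolding h_def by (simp add: sum.remove)
    also have "(\<Sum>y\<in>UNIV - {0}. g x y) = (\<Sum>y\<in>(UNIV - {0}) - Y1. g x y) + (\<Sum>y\<in>Y1. g x y)"
      using Y1sub by (simp add: sum.subset_diff)
    also have "(\<Sum>y\<in>Y1. g x y) = (\<Sum>y\<in>Y1. 1)"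
    proof (rule sum.cong)
      fix y assume "y \<in> Y1"
      then have "x^(q+1) + y^(q+1) = 0" by (simp add: Y1_def f_def)
      then show "g x y = 1" unfolding g_def using f0 by simp
    qed simp
    also have "g x 0 = q + 1"
    proof -
      have "g x 0 = card (f (- (x^(q+1))))" unfolding g_def by simp
      also have "\<dots> = q + 1" unfolding f_def by (rule negK_card[OF x0])
      finally show ?thesis .
    qed
    also have "(\<Sum>y\<in>(UNIV - {0}) - Y1. g x y) \<le> (\<Sum>y\<in>(UNIV - {0}) - Y1. q + 1)"
      unfolding g_def by (rule sum_mono) (rule fle)
    also have "\<dots> = (q^2 - 1 - (q+1)) * (q+1)"
      using Y1sub cY1 cY by (simp add: card_Diff_subset)
    finally have A: "h x \<le> q + 1 + ((q^2 - 1 - (q+1)) * (q+1) + (q + 1))" using cY1 by simp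
    obtain m where m: "q = m + 2" using q2 by (metis add.commute le_Suc_ex)
    have "q + 1 + ((q^2 - 1 - (q+1)) * (q+1) + (q + 1)) = (q+1)*(q^2-q)"
      unfolding m by (simp add: power2_eq_square algebra_simps)
    with A show ?thesis by simp
  qed
  have "(\<Sum>x\<in>UNIV. h x) = h 0 + (\<Sum>x\<in>UNIV - {0}. h x)" by (simp add: sum.remove)
  also have "\<dots> \<le> 1 + (q^2-1)*(q+1) + (\<Sum>x\<in>UNIV - {0::'a}. (q+1)*(q^2-q))"
    using h0 hx by (intro add_mono sum_mono) auto
  also have "\<dots> = 1 + (q^2-1)*(q+1) + (q^2-1)*((q+1)*(q^2-q))" using cY by simp
  also have "\<dots> = 1 + (q^2-1)*(q^3+1)"
  proof -
    obtain m where m: "q = m + 2" using q2 by (metis add.commute le_Suc_ex)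
    show ?thesis unfolding m by (simp add: power2_eq_square power3_eq_cube algebra_simps)
  qed
  finally show ?thesis using cS by simp
qed

end

definition dot3 :: "'a::field \<times> 'a \<times> 'a \<Rightarrow> 'a \<times> 'a \<times> 'a \<Rightarrow> 'a" where
  "dot3 a u = fst a * fst u + fst (snd a) * fst (snd u) + snd (snd a) * snd (snd u)"

definition cross3 :: "'a::field \<times> 'a \<times> 'a \<Rightarrow> 'a \<times> 'a \<times> 'a \<Rightarrow> 'a \<times> 'a \<times> 'a" where
  "cross3 x y = (fst (snd x) * snd (snd y) - snd (snd x) * fst (snd y),
                 snd (snd x) * fst y - fst x * snd (snd y),
                 fst x * fst (snd y) - fst (snd x) * fst y)"

definition smul3 :: "'a::field \<Rightarrow> 'a \<times> 'a \<times> 'a \<Rightarrow> 'a \<times> 'a \<times> 'a" where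
  "smul3 c v = (c * fst v, c * fst (snd v), c * snd (snd v))"

lemma proj_point_alt: "proj_point v = {smul3 c v | c. c \<noteq> 0}"
  by (simp add: proj_point_def smul3_def)

lemma in_proj_point: "v \<in> proj_point v"
  unfolding proj_point_alt smul3_def by (cases v) force

lemma proj_point_smul:
  assumes "c \<noteq> 0" shows "proj_point (smul3 c v) = proj_point v"
proof
  show "proj_point (smul3 c v) \<subseteq> proj_point v"
  proof
    fix w assume "w \<in> proj_point (smul3 c v)"
    then obtain d where "d \<noteq> 0" "w = smul3 d (smul3 c v)" unfolding proj_point_alt by auto
    then have "w = smul3 (d*c) v" "d*c \<noteq> 0" using assms by (auto simp: smul3_def)
    then show "w \<in> proj_point v" unfolding proj_point_alt by blast
  qed
  show "proj_point v \<subseteq> proj_point (smul3 c v)"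
  proof
    fix w assume "w \<in> proj_point v"
    then obtain d where "d \<noteq> 0" "w = smul3 d v" unfolding proj_point_alt by auto
    then have "w = smul3 (d/c) (smul3 c v)" "d/c \<noteq> 0" using assms by (auto simp: smul3_def)
    then show "w \<in> proj_point (smul3 c v)" unfolding proj_point_alt by blast
  qed
qed

lemma line_dot:
  assumes "P \<in> pg_line l" "w \<in> P" shows "dot3 l w = 0"
  using assms unfolding pg_line_def dot3_def by (cases w) auto

lemma line_smul:
  assumes "c \<noteq> 0" shows "pg_line (smul3 c l) = pg_line l"
proof -
  have e: "(c*a1*x + c*a2*y + c*a3*z = 0) \<longleftrightarrow> (a1*x+a2*y+a3*z = 0)" for a1 a2 a3 x y z :: 'a
  proof -
    have "c*a1*x + c*a2*y + c*a3*z = c*(a1*x+a2*y+a3*z)" by (simp add: algebra_simps)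
    then show ?thesis using assms by simp
  qed
  show ?thesis unfolding pg_line_def smul3_def by (simp add: e)
qed

lemma cross_zero:
  fixes x y :: "'a::field \<times> 'a \<times> 'a"
  assumes "cross3 x y = (0,0,0)" "y \<noteq> (0,0,0)"
  shows "\<exists>c. x = smul3 c y"
proof -
  obtain x1 x2 x3 where x: "x = (x1,x2,x3)" by (cases x) auto
  obtain y1 y2 y3 where y: "y = (y1,y2,y3)" by (cases y) auto
  have e: "x2*y3 = x3*y2" "x3*y1 = x1*y3" "x1*y2 = x2*y1"
    using assms(1) unfolding x y cross3_def by auto
  show ?thesis
  proof (cases "y1 = 0")
    case False
    have "x = smul3 (x1/y1) y" unfolding x y smul3_def using False e
      by (auto simp: field_simps)
    then show ?thesis by blast
  next
    case y1: True
    show ?thesis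
    proof (cases "y2 = 0")
      case False
      have "x = smul3 (x2/y2) y" unfolding x y smul3_def using False e y1
        by (auto simp: field_simps)
      then show ?thesis by blast
    next
      case y2: True
      then have y3: "y3 \<noteq> 0" using y1 assms(2) y by auto
      have "x = smul3 (x3/y3) y" unfolding x y smul3_def using y3 e y1 y2
        by (auto simp: field_simps)
      then show ?thesis by blast
    qed
  qed
qed

lemma cross_cross:
  assumes "dot3 a u = 0" "dot3 b u = 0"
  shows "cross3 u (cross3 a b) = (0,0,0)"
proof -
  obtain a1 a2 a3 where a: "a = (a1,a2,a3)" by (cases a) auto
  obtain b1 b2 b3 where b: "b = (b1,b2,b3)" by (cases b) auto
  obtain u1 u2 u3 where u: "u = (u1,u2,u3)" by (cases u) auto
  have e: "a1*u1 + a2*u2 + a3*u3 = 0" "b1*u1 + b2*u2 + b3*u3 = 0"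
    using assms unfolding a b u dot3_def by auto
  have "u2 * (a1 * b2 - a2 * b1) - u3 * (a3 * b1 - a1 * b3)
      = a1 * (b1*u1 + b2*u2 + b3*u3) - b1 * (a1*u1 + a2*u2 + a3*u3)" by (simp add: algebra_simps)
  moreover have "u3 * (a2 * b3 - a3 * b2) - u1 * (a1 * b2 - a2 * b1)
      = a2 * (b1*u1 + b2*u2 + b3*u3) - b2 * (a1*u1 + a2*u2 + a3*u3)" by (simp add: algebra_simps)
  moreover have "u1 * (a3 * b1 - a1 * b3) - u2 * (a2 * b3 - a3 * b2)
      = a3 * (b1*u1 + b2*u2 + b3*u3) - b3 * (a1*u1 + a2*u2 + a3*u3)" by (simp add: algebra_simps)
  ultimately show ?thesis using e unfolding a b u cross3_def by simp
qed

lemma smul_smul: "smul3 c (smul3 d v) = smul3 (c*d) v"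
  by (simp add: smul3_def)

lemma smul_zero_iff: "smul3 c v = (0,0,0) \<longleftrightarrow> c = 0 \<or> v = (0,0,0)"
  by (cases v) (auto simp: smul3_def)

lemma two_points_one_line:
  fixes P Q :: "('a::field \<times> 'a \<times> 'a) set"
  assumes "P \<in> pg_points" "Q \<in> pg_points" "P \<noteq> Q"
    and "L1 \<in> pg_lines" "L2 \<in> pg_lines"
    and "P \<in> L1" "Q \<in> L1" "P \<in> L2" "Q \<in> L2"
  shows "L1 = L2"
proof (rule ccontr)
  assume ne: "L1 \<noteq> L2"
  obtain u where u: "P = proj_point u" "u \<noteq> (0,0,0)" using assms(1) unfolding pg_points_def by auto
  obtain v where v: "Q = proj_point v" "v \<noteq> (0,0,0)" using assms(2) unfolding pg_points_def by auto
  obtain a where a: "L1 = pg_line a" "a \<noteq> (0,0,0)" using assms(4) unfolding pg_lines_def by auto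
  obtain b where b: "L2 = pg_line b" "b \<noteq> (0,0,0)" using assms(5) unfolding pg_lines_def by auto
  have d: "dot3 a u = 0" "dot3 a v = 0" "dot3 b u = 0" "dot3 b v = 0"
    using line_dot assms(6-9) a b u v in_proj_point by metis+
  show False
  proof (cases "cross3 a b = (0,0,0)")
    case True
    then obtain c where c: "a = smul3 c b" using cross_zero b(2) by blast
    then have "c \<noteq> 0" using a(2) by (auto simp: smul_zero_iff)
    then have "L1 = L2" using a b c line_smul by metis
    then show False using ne by simp
  next
    case False
    obtain c where c: "u = smul3 c (cross3 a b)" using cross_zero[OF cross_cross[OF d(1,3)] False] by blast
    obtain e where e: "v = smul3 e (cross3 a b)" using cross_zero[OF cross_cross[OF d(2,4)] False] by blast
    have c0: "c \<noteq> 0" using u(2) c by (auto simp: smul_zero_iff)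
    have e0: "e \<noteq> 0" using v(2) e by (auto simp: smul_zero_iff)
    have "v = smul3 (e/c) u" using c e c0 by (simp add: smul_smul)
    then have "Q = P" using u v proj_point_smul[of "e/c" u] e0 c0 by simp
    then show False using assms(3) by simp
  qed
qed

lemma lin1: "2*(S::nat) \<le> 2*u + M \<Longrightarrow> (i::nat) \<le> g \<Longrightarrow> (t::nat) + u = w + i \<Longrightarrow> 2*(t+S) \<le> 2*w + (M + 2*(g::nat))"
  by presburger

lemma lin2: "c \<le> k \<Longrightarrow> 2*S \<le> 2*c + M \<Longrightarrow> 2*S \<le> 2*k + (M::nat)"
  by presburger

lemma bonf:
  fixes T :: "'i \<Rightarrow> 'x set"
  assumes "finite G" "finite X" "\<forall>C\<in>G. T C \<subseteq> X"
    and "\<forall>C\<in>G. \<forall>D\<in>G. C \<noteq> D \<longrightarrow> card (T C \<inter> T D) \<le> 1"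
  shows "2 * (\<Sum>C\<in>G. card (T C)) \<le> 2 * card (\<Union>C\<in>G. T C) + card G * (card G - 1)"
  using assms
proof (induction G rule: finite_induct)
  case empty
  then show ?case by simp
next
  case (insert C G)
  define U where "U = (\<Union>D\<in>G. T D)"
  have finU: "finite U" "finite (T C)" using insert.prems insert.hyps
    by (auto simp: U_def intro: finite_subset)
  have IH: "2 * (\<Sum>C\<in>G. card (T C)) \<le> 2 * card U + card G * (card G - 1)"
    using insert.IH insert.prems unfolding U_def by auto
  have "T C \<inter> U = (\<Union>D\<in>G. T C \<inter> T D)" unfolding U_def by auto
  then have "card (T C \<inter> U) = card (\<Union>D\<in>G. T C \<inter> T D)" by simp
  also have "\<dots> \<le> (\<Sum>D\<in>G. card (T C \<inter> T D))"
    by (rule card_UN_le[OF insert.hyps(1)])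
  also have "\<dots> \<le> (\<Sum>D\<in>G. 1)"
    using insert.prems(3) insert.hyps(2) by (intro sum_mono) auto
  finally have I: "card (T C \<inter> U) \<le> card G" by simp
  have UI: "card (T C) + card U = card (T C \<union> U) + card (T C \<inter> U)"
    by (rule card_Un_Int) (use finU in auto)
  have Ueq: "(\<Union>D\<in>insert C G. T D) = T C \<union> U" unfolding U_def by auto
  have Seq: "(\<Sum>D\<in>insert C G. card (T D)) = card (T C) + (\<Sum>D\<in>G. card (T D))"
    using insert.hyps by simp
  have ci: "card (insert C G) = card G + 1" using insert.hyps by simp
  have ceq: "card (insert C G) * (card (insert C G) - 1) = card G * (card G - 1) + 2 * card G"
    unfolding ci by (cases "card G") (auto simp: algebra_simps)
  have A: "2 * (card (T C) + (\<Sum>D\<in>G. card (T D))) \<le> 2 * card (T C \<union> U) + (card G * (card G - 1) + 2 * card G)"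
    by (rule lin1[OF IH I UI])
  show ?case unfolding Ueq Seq ceq using A by linarith
qed

lemma L_bound:
  fixes T :: "'i \<Rightarrow> 'x set"
  assumes "finite F" "finite X" "\<forall>C\<in>F. T C \<subseteq> X"
    and "\<forall>C\<in>F. \<forall>D\<in>F. C \<noteq> D \<longrightarrow> card (T C \<inter> T D) \<le> 1"
    and "\<forall>C\<in>F. sqrt (2 * real (card X)) < real (card (T C))"
  shows "real (\<Sum>C\<in>F. card (T C)) \<le> 2 * real (card X)"
proof (cases "F = {}")
  case True then show ?thesis by simp
next
  case False
  define k where "k = card X"
  define s where "s = sqrt (2 * real k)"
  have s0: "s \<ge> 0" unfolding s_def by simp
  have ss: "s^2 = 2 * real k" unfolding s_def by simp
  obtain C0 where C0: "C0 \<in> F" using False by auto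
  have "card (T C0) \<le> k" unfolding k_def using assms(2,3) C0 by (auto intro: card_mono)
  then have "s < real k" using assms(5) C0 unfolding s_def k_def by force
  have k1: "k \<ge> 1" using \<open>s < real k\<close> s0 by linarith
  then have spos: "s > 0" unfolding s_def by simp
  show ?thesis
  proof (cases "real (card F) < s")
    case True
    have B: "2 * (\<Sum>C\<in>F. card (T C)) \<le> 2 * card (\<Union>C\<in>F. T C) + card F * (card F - 1)"
      by (rule bonf) (use assms in auto)
    have "card (\<Union>C\<in>F. T C) \<le> k" unfolding k_def using assms(2,3) by (auto intro: card_mono)
    moreover have "card F * (card F - 1) \<le> card F * card F" by simp
    ultimately have "2 * (\<Sum>C\<in>F. card (T C)) \<le> 2 * k + card F * card F" using B by linarith
    then have "real (2 * (\<Sum>C\<in>F. card (T C))) \<le> real (2 * k + card F * card F)"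
      by (simp only: of_nat_le_iff)
    then have "2 * real (\<Sum>C\<in>F. card (T C)) \<le> 2 * real k + real (card F) * real (card F)"
      by simp
    moreover have "real (card F) * real (card F) \<le> s * s"
      using True by (intro mult_mono) auto
    ultimately show ?thesis using ss unfolding k_def by (simp add: power2_eq_square)
  next
    case False
    define r where "r = nat \<lceil>s\<rceil>"
    have rs: "s \<le> real r" "real r < s + 1" unfolding r_def using s0 by linarith+
    have r1: "r \<ge> 1" using rs spos by linarith
    have "r \<le> card F" using False rs unfolding r_def by linarith
    then obtain G where G: "G \<subseteq> F" "card G = r" "finite G" by (rule obtain_subset_with_card_n)
    have p1: "\<forall>C\<in>G. T C \<subseteq> X" using assms(3) G(1) by blast
    have p2: "\<forall>C\<in>G. \<forall>D\<in>G. C \<noteq> D \<longrightarrow> card (T C \<inter> T D) \<le> 1" using assms(4) G(1) by blast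
    have B: "2 * (\<Sum>C\<in>G. card (T C)) \<le> 2 * card (\<Union>C\<in>G. T C) + card G * (card G - 1)"
      by (rule bonf[OF G(3) assms(2) p1 p2])
    have "card (\<Union>C\<in>G. T C) \<le> k" unfolding k_def using assms(2,3) G by (auto intro: card_mono)
    then have "2 * (\<Sum>C\<in>G. card (T C)) \<le> 2 * k + r * (r - 1)" using B G(2) lin2 by metis
    then have "real (2 * (\<Sum>C\<in>G. card (T C))) \<le> real (2 * k + r * (r - 1))"
      by (simp only: of_nat_le_iff)
    then have B2: "2 * real (\<Sum>C\<in>G. card (T C)) \<le> 2 * real k + real r * (real r - 1)"
      using r1 by (simp add: of_nat_diff)
    have "(\<Sum>C\<in>G. s) \<le> (\<Sum>C\<in>G. real (card (T C)))"
      using assms(5) G unfolding s_def k_def by (intro sum_mono) (auto intro: less_imp_le)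
    then have "real r * s \<le> real (\<Sum>C\<in>G. card (T C))" using G by simp
    with B2 have C1: "2 * real r * s \<le> 2 * real k + real r * (real r - 1)" by linarith
    have "(real r - s) * (real r - s - 1) \<le> 0"
      using rs by (intro mult_nonneg_nonpos) auto
    then have "real r * real r - (2*s+1) * real r + s*s + s \<le> 0" by (simp add: algebra_simps)
    with C1 ss spos show ?thesis by (simp add: power2_eq_square algebra_simps)
  qed
qed

lemma proj_card:
  fixes v :: "'a::{finite,field} \<times> 'a \<times> 'a"
  assumes "v \<noteq> (0,0,0)"
  shows "card (proj_point v) = card (UNIV::'a set) - 1"
proof -
  have eq: "proj_point v = (\<lambda>c. smul3 c v) ` (UNIV - {0})"
    unfolding proj_point_alt by auto
  have inj: "inj_on (\<lambda>c. smul3 c v) (UNIV - {0})"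
  proof (rule inj_onI)
    fix c d assume "smul3 c v = smul3 d v"
    moreover obtain v1 v2 v3 where v: "v = (v1,v2,v3)" by (cases v) auto
    ultimately have "c*v1 = d*v1" "c*v2 = d*v2" "c*v3 = d*v3" by (auto simp: smul3_def)
    then show "c = d" using assms v by auto
  qed
  show ?thesis unfolding eq using card_image[OF inj] by (simp add: card_Diff_singleton)
qed

lemma proj_disj:
  fixes u v :: "'a::field \<times> 'a \<times> 'a"
  assumes "w \<in> proj_point u" "w \<in> proj_point v"
  shows "proj_point u = proj_point v"
proof -
  obtain c where c: "c \<noteq> 0" "w = smul3 c u" using assms(1) unfolding proj_point_alt by auto
  obtain d where d: "d \<noteq> 0" "w = smul3 d v" using assms(2) unfolding proj_point_alt by auto
  have "v = smul3 (c/d) u"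
  proof -
    obtain u1 u2 u3 where u: "u = (u1,u2,u3)" by (cases u) auto
    obtain v1 v2 v3 where v: "v = (v1,v2,v3)" by (cases v) auto
    have "c*u1 = d*v1" "c*u2 = d*v2" "c*u3 = d*v3" using c d u v by (auto simp: smul3_def)
    then show ?thesis using d(1) u v by (auto simp: smul3_def field_simps)
  qed
  then show ?thesis using proj_point_smul[of "c/d" u] c d by simp
qed

lemma H_card:
  assumes q2: "q \<ge> 2" and cardF: "card (UNIV :: 'a::{finite,field} set) = q ^ 2"
  shows "card (hermitian_unital q :: ('a \<times> 'a \<times> 'a) set set) \<le> q^3 + 1"
proof -
  define H where "H = (hermitian_unital q :: ('a \<times> 'a \<times> 'a) set set)"
  define Sol where "Sol = {(x,y,z). x^(q+1)+y^(q+1)+z^(q+1) = (0::'a)}"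
  have sub: "\<Union>H \<subseteq> Sol - {(0,0,0)}"
  proof
    fix w assume "w \<in> \<Union>H"
    then obtain P where P: "P \<in> H" "w \<in> P" by auto
    then have Pp: "P \<in> pg_points" and Peq: "\<forall>(x,y,z)\<in>P. x^(q+1)+y^(q+1)+z^(q+1) = 0"
      unfolding H_def hermitian_unital_def by auto
    obtain v where v: "P = proj_point v" "v \<noteq> (0,0,0)" using Pp unfolding pg_points_def by auto
    obtain c where c: "c \<noteq> 0" "w = smul3 c v" using P(2) v unfolding proj_point_alt by auto
    have "w \<noteq> (0,0,0)" using c v(2) by (simp add: smul_zero_iff)
    moreover have "w \<in> Sol" using Peq P(2) unfolding Sol_def by auto
    ultimately show "w \<in> Sol - {(0,0,0)}" by simp
  qed
  have disj: "pairwise disjnt H"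
  proof (rule pairwiseI)
    fix P Q assume PQ: "P \<in> H" "Q \<in> H" "P \<noteq> Q"
    have "P \<in> pg_points" "Q \<in> pg_points" using PQ unfolding H_def hermitian_unital_def by auto
    then obtain u v where "P = proj_point u" "Q = proj_point v"
      unfolding pg_points_def by blast
    then show "disjnt P Q" using PQ(3) proj_disj unfolding disjnt_def by blast
  qed
  have cardP: "\<And>P. P \<in> H \<Longrightarrow> card P = q^2 - 1"
  proof -
    fix P assume "P \<in> H"
    then have "P \<in> pg_points" unfolding H_def hermitian_unital_def by auto
    then obtain v where "P = proj_point v" "v \<noteq> (0,0,0)"
      unfolding pg_points_def by blast
    then show "card P = q^2 - 1" using proj_card[of v] cardF by simp
  qed
  have "card (\<Union>H) = sum card H" by (rule card_Union_disjoint[OF disj]) simp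
  also have "\<dots> = card H * (q^2 - 1)" using cardP by simp
  finally have cU: "card (\<Union>H) = card H * (q^2 - 1)" .
  have "card (\<Union>H) \<le> card (Sol - {(0,0,0)})" by (rule card_mono[OF _ sub]) simp
  also have "\<dots> = card Sol - 1"
    by (rule card_Diff_singleton) (simp add: Sol_def)
  also have "\<dots> \<le> (q^2-1)*(q^3+1)" using sol_card[OF q2 cardF] unfolding Sol_def by simp
  finally have "card H * (q^2 - 1) \<le> (q^3+1) * (q^2-1)" using cU by (simp add: mult.commute)
  moreover have "q^2 - 1 > 0" using q2 by (simp add: power2_eq_square) (metis One_nat_def less_1_mult Suc_1 Suc_le_lessD)
  ultimately have "card H \<le> q^3 + 1" using mult_le_cancel2 by blast
  then show ?thesis unfolding H_def .
qed

theorem mainTheorem5: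
  fixes q k :: nat and X :: "('a::{finite,field} \<times> 'a \<times> 'a) set set set"
  assumes "\<exists>p e. prime (p::nat) \<and> e \<ge> 1 \<and> q = p ^ e"
    and "q \<ge> 2"
    and "card (UNIV :: 'a set) = q ^ 2"
    and "X \<subseteq> secants q"
    and "card X = k"
  shows "let n = q ^ 2 * (q ^ 2 - q + 1);
             \<S> = {C \<in> TX q X. real (card (X \<inter> C)) \<le> sqrt (2 * real k) / ln (real n)};
             \<M> = {C \<in> TX q X. sqrt (2 * real k) / ln (real n) < real (card (X \<inter> C))
                              \<and> real (card (X \<inter> C)) \<le> sqrt (2 * real k)};
             \<L> = {C \<in> TX q X. real (card (X \<inter> C)) > sqrt (2 * real k)}
         in real (vol X \<L>) \<le> 2 * real k
            \<and> real (vol X (\<S> \<union> \<M>)) \<ge> (real q - 1) * real k - real q ^ 3 - 1"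
proof -
  define H where "H = (hermitian_unital q :: ('a \<times> 'a \<times> 'a) set set)"
  have HP: "H \<subseteq> pg_points" unfolding H_def hermitian_unital_def by auto
  have inter1: "L1 = L2" if "P \<in> H" "Q \<in> H" "P \<noteq> Q" "L1 \<in> clique q P" "L1 \<in> clique q Q"
      "L2 \<in> clique q P" "L2 \<in> clique q Q" for P Q L1 L2
    using two_points_one_line[of P Q L1 L2] that HP unfolding clique_def secants_def by auto
  have F1: "\<forall>C\<in>cliques q. \<forall>D\<in>cliques q. C \<noteq> D \<longrightarrow> card ((X \<inter> C) \<inter> (X \<inter> D)) \<le> 1"
  proof (intro ballI impI)
    fix C D :: "('a \<times> 'a \<times> 'a) set set set" assume CD: "C \<in> cliques q" "D \<in> cliques q" "C \<noteq> D"
    then obtain P Q where PQ: "P \<in> H" "Q \<in> H" "C = clique q P" "D = clique q Q"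
      unfolding cliques_def H_def by auto
    then have "P \<noteq> Q" using CD by auto
    then have "\<forall>a1\<in>(X \<inter> C) \<inter> (X \<inter> D). \<forall>a2\<in>(X \<inter> C) \<inter> (X \<inter> D). a1 = a2"
      using inter1 PQ by blast
    then show "card ((X \<inter> C) \<inter> (X \<inter> D)) \<le> 1" using card_le_Suc0_iff_eq[of "(X \<inter> C) \<inter> (X \<inter> D)"] by simp
  qed
  define H' where "H' = {P \<in> H. 2 \<le> card (X \<inter> clique q P)}"
  have inj: "inj_on (clique q) H'"
  proof (rule inj_onI)
    fix P Q assume P: "P \<in> H'" and Q: "Q \<in> H'" and eq: "clique q P = clique q Q"
    show "P = Q"
    proof (rule ccontr)
      assume ne: "P \<noteq> Q"
      have "\<not> card (X \<inter> clique q P) \<le> Suc 0" using P unfolding H'_def by auto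
      then obtain a1 a2 where a: "a1 \<in> X \<inter> clique q P" "a2 \<in> X \<inter> clique q P" "a1 \<noteq> a2"
        using card_le_Suc0_iff_eq[of "X \<inter> clique q P"] by auto
      have "a1 = a2" using inter1[of P Q a1 a2] P Q ne a eq unfolding H'_def by auto
      then show False using a by simp
    qed
  qed
  have TXeq: "TX q X = clique q ` H'"
    unfolding TX_def cliques_def H'_def H_def by auto
  have volTX: "vol X (TX q X) = (\<Sum>P\<in>H'. card (X \<inter> clique q P))"
    unfolding vol_def TXeq by (rule sum.reindex[OF inj, unfolded comp_def])
  have cnt: "card {x \<in> A. R x} = (\<Sum>x\<in>A. if R x then 1 else 0)" if "finite A" for A :: "'b set" and R
    using sum.inter_filter[OF that, of "\<lambda>_. 1::nat" R] by simp
  have dc: "(\<Sum>P\<in>H. card (X \<inter> clique q P)) = (q+1) * k"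
  proof -
    have "(\<Sum>P\<in>H. card (X \<inter> clique q P)) = (\<Sum>P\<in>H. \<Sum>L\<in>X. if P \<in> L then 1 else 0)"
    proof (rule sum.cong)
      fix P assume "P \<in> H"
      have "X \<inter> clique q P = {L \<in> X. P \<in> L}" using assms(4) unfolding clique_def by auto
      then show "card (X \<inter> clique q P) = (\<Sum>L\<in>X. if P \<in> L then 1 else 0)" using cnt[of X] by simp
    qed simp
    also have "\<dots> = (\<Sum>L\<in>X. \<Sum>P\<in>H. if P \<in> L then 1 else 0)" by (rule sum.swap)
    also have "\<dots> = (\<Sum>L\<in>X. q + 1)"
    proof (rule sum.cong)
      fix L assume "L \<in> X"
      then have "card (L \<inter> H) = q + 1" using assms(4) unfolding secants_def H_def by auto
      moreover have "L \<inter> H = {P \<in> H. P \<in> L}" by auto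
      ultimately show "(\<Sum>P\<in>H. if P \<in> L then 1 else 0) = q + 1" using cnt[of H] by simp
    qed simp
    finally show ?thesis using assms(5) by simp
  qed
  have F3: "(q+1) * k \<le> vol X (TX q X) + card H"
  proof -
    have "H' \<subseteq> H" unfolding H'_def by auto
    then have "(\<Sum>P\<in>H. card (X \<inter> clique q P)) = (\<Sum>P\<in>H - H'. card (X \<inter> clique q P)) + (\<Sum>P\<in>H'. card (X \<inter> clique q P))"
      by (simp add: sum.subset_diff)
    also have "(\<Sum>P\<in>H - H'. card (X \<inter> clique q P)) \<le> (\<Sum>P\<in>H - H'. 1)"
      by (rule sum_mono) (auto simp: H'_def)
    also have "\<dots> \<le> card H" by (simp add: card_mono)
    finally show ?thesis using dc volTX by simp
  qed
  have Hc: "card H \<le> q^3 + 1" unfolding H_def by (rule H_card[OF assms(2,3)])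
  show ?thesis unfolding Let_def
  proof -
    define s where "s = sqrt (2 * real k)"
    define t where "t = s / ln (real (q ^ 2 * (q ^ 2 - q + 1)))"
    define SS where "SS = {C \<in> TX q X. real (card (X \<inter> C)) \<le> t}"
    define MM where "MM = {C \<in> TX q X. t < real (card (X \<inter> C)) \<and> real (card (X \<inter> C)) \<le> s}"
    define LL where "LL = {C \<in> TX q X. real (card (X \<inter> C)) > s}"
    have LLsub: "LL \<subseteq> cliques q" unfolding LL_def TX_def by auto
    have vL: "real (vol X LL) \<le> 2 * real k"
    proof -
      have "real (\<Sum>C\<in>LL. card (X \<inter> C)) \<le> 2 * real (card X)"
      proof (rule L_bound)
        show "\<forall>C\<in>LL. \<forall>D\<in>LL. C \<noteq> D \<longrightarrow> card (X \<inter> C \<inter> (X \<inter> D)) \<le> 1"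
          using F1 LLsub by blast
        show "\<forall>C\<in>LL. sqrt (2 * real (card X)) < real (card (X \<inter> C))"
          using assms(5) unfolding LL_def s_def by auto
      qed auto
      then show ?thesis unfolding vol_def using assms(5) by simp
    qed
    have cov: "TX q X \<subseteq> (SS \<union> MM) \<union> LL" unfolding SS_def MM_def LL_def by auto
    have "vol X (TX q X) \<le> vol X ((SS \<union> MM) \<union> LL)"
      unfolding vol_def by (rule sum_mono2) (use cov in auto)
    also have "\<dots> \<le> vol X (SS \<union> MM) + vol X LL"
      unfolding vol_def using sum.union_inter[of "SS \<union> MM" LL "\<lambda>C. card (X \<inter> C)"] by simp
    finally have "vol X (TX q X) \<le> vol X (SS \<union> MM) + vol X LL" .
    with F3 Hc have "(q+1) * k \<le> vol X (SS \<union> MM) + vol X LL + (q^3 + 1)" by linarith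
    then have "real ((q+1) * k) \<le> real (vol X (SS \<union> MM) + vol X LL + (q^3 + 1))"
      by (simp only: of_nat_le_iff)
    then have "(real q + 1) * real k \<le> real (vol X (SS \<union> MM)) + real (vol X LL) + real q ^ 3 + 1"
      by (simp add: algebra_simps)
    with vL have "real (vol X (SS \<union> MM)) \<ge> (real q - 1) * real k - real q ^ 3 - 1"
      by (simp add: algebra_simps)
    with vL show "real (vol X {C \<in> TX q X. real (card (X \<inter> C)) > sqrt (2 * real k)}) \<le> 2 * real k \<and>
        (real q - 1) * real k - real q ^ 3 - 1 \<le> real (vol X
          ({C \<in> TX q X. real (card (X \<inter> C)) \<le> sqrt (2 * real k) / ln (real (q ^ 2 * (q ^ 2 - q + 1)))} \<union>
           {C \<in> TX q X. sqrt (2 * real k) / ln (real (q ^ 2 * (q ^ 2 - q + 1))) < real (card (X \<inter> C)) \<and>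
              real (card (X \<inter> C)) \<le> sqrt (2 * real k)}))"
      unfolding SS_def MM_def LL_def s_def t_def by simp
  qed
qed

end
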